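(* Under the hypotheses of Theorem 3 (a 2-D Lorentzian foliation with $d(H^\flat)=-d(\tilde H^\flat)$, a Lorentzian foliation adapted frame $(e_0,e_1,e_2,e_3)$ on a starlike open set $U$, and the magnetically dominated force-free field $F=u\,e_2^\flat\wedge e_3^\flat$ on $U$ with kernel tangent to the leaves), if the distribution spanned by $e_2$ and $e_3$ is involutive, then $F$ is a vacuum solution, i.e. its current density vector vanishes.
   Context: $(\mathcal M,g)$ is a 4-dimensional spacetime with metric of signature $(-,+,+,+)$ and Levi-Civita connection $\nabla$. An electromagnetic field is a 2-form $F$ with $dF=0$, with current density vector $j^\nu=-\nabla_\mu F^{\mu\nu}$; force-free means $F(j,\chi)=0$ for all $\chi$; magnetically dominated means $F_{\mu\nu}F^{\mu\nu}>0$; vacuum means $j=0$. A 2-D Lorentzian foliation is a foliation by 2-dimensional submanifolds with Lorentzian induced metric; a Lorentzian foliation adapted frame is an orthonormal frame ($g(e_\mu,e_\nu)=\mathrm{diag}(-1,1,1,1)_{\mu\nu}$) with $e_0,e_1$ spanning the leaves' tangent spaces. $H$, $\tilde H$ are defined by $2H=[-g(\nabla_{e_0}e_0,e_2)+g(\nabla_{e_1}e_1,e_2)]e_2+[-g(\nabla_{e_0}e_0,e_3)+g(\nabla_{e_1}e_1,e_3)]e_3$, $2\tilde H=[-g(\nabla_{e_2}e_2,e_0)-g(\nabla_{e_3}e_3,e_0)]e_0+[g(\nabla_{e_2}e_2,e_1)+g(\nabla_{e_3}e_3,e_1)]e_1$. A distribution is involutive if it is closed under the Lie bracket. *)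

theory Defs
  imports "HOL-Analysis.Analysis"
begin

text \<open>Local-coordinate model: the open set U is a subset of a coordinate chart, identified
with an open subset of R^4 = real^4.  Coordinate indices and frame indices range over the
4-element type 4.  Vector fields are maps real^4 => real^4 (coordinate components),
1-forms are maps real^4 => real^4 (covariant components), 2-forms are maps
real^4 => 4 => 4 => real (components F_ab), the metric is g :: real^4 => real^4^4
with components g x $ a $ b.\<close>

type_synonym pt = "real^4"
type_synonym vfield = "real^4 \<Rightarrow> real^4"
type_synonym metric = "real^4 \<Rightarrow> real^4^4"
type_synonym form2 = "real^4 \<Rightarrow> 4 \<Rightarrow> 4 \<Rightarrow> real"

definition pd :: "4 \<Rightarrow> (real^4 \<Rightarrow> real) \<Rightarrow> real^4 \<Rightarrow> real" where
  "pd i f x = frechet_derivative f (at x) (axis i 1)"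

fun Ck :: "nat \<Rightarrow> (real^4) set \<Rightarrow> (real^4 \<Rightarrow> real) \<Rightarrow> bool" where
  "Ck 0 U f = continuous_on U f"
| "Ck (Suc k) U f = ((\<forall>x\<in>U. f differentiable (at x)) \<and> (\<forall>i. Ck k U (pd i f)))"

definition smooth_on :: "(real^4) set \<Rightarrow> (real^4 \<Rightarrow> real) \<Rightarrow> bool" where
  "smooth_on U f \<longleftrightarrow> (\<forall>k. Ck k U f)"

definition smooth_vf :: "(real^4) set \<Rightarrow> vfield \<Rightarrow> bool" where
  "smooth_vf U X \<longleftrightarrow> (\<forall>k. smooth_on U (\<lambda>y. X y $ k))"

definition smooth_metric :: "(real^4) set \<Rightarrow> metric \<Rightarrow> bool" where
  "smooth_metric U g \<longleftrightarrow> (\<forall>a b. smooth_on U (\<lambda>y. g y $ a $ b))"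

definition gdot :: "metric \<Rightarrow> real^4 \<Rightarrow> real^4 \<Rightarrow> real^4 \<Rightarrow> real" where
  "gdot g x v w = (\<Sum>a\<in>UNIV. \<Sum>b\<in>UNIV. g x $ a $ b * v $ a * w $ b)"

definition ginv :: "metric \<Rightarrow> real^4 \<Rightarrow> real^4^4" where
  "ginv g x = matrix_inv (g x)"

definition christ :: "metric \<Rightarrow> real^4 \<Rightarrow> 4 \<Rightarrow> 4 \<Rightarrow> 4 \<Rightarrow> real" where
  "christ g x k i j = (1/2) * (\<Sum>l\<in>UNIV. ginv g x $ k $ l *
      (pd i (\<lambda>y. g y $ l $ j) x + pd j (\<lambda>y. g y $ l $ i) x - pd l (\<lambda>y. g y $ i $ j) x))"

definition cov :: "metric \<Rightarrow> vfield \<Rightarrow> vfield \<Rightarrow> real^4 \<Rightarrow> real^4" where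
  "cov g X Y x = (\<chi> k. (\<Sum>i\<in>UNIV. X x $ i * pd i (\<lambda>y. Y y $ k) x)
      + (\<Sum>i\<in>UNIV. \<Sum>j\<in>UNIV. christ g x k i j * X x $ i * Y x $ j))"

definition lie :: "vfield \<Rightarrow> vfield \<Rightarrow> vfield" where
  "lie X Y x = (\<chi> k. \<Sum>i\<in>UNIV. X x $ i * pd i (\<lambda>y. Y y $ k) x - Y x $ i * pd i (\<lambda>y. X y $ k) x)"

definition involutive2 :: "(real^4) set \<Rightarrow> vfield \<Rightarrow> vfield \<Rightarrow> bool" where
  "involutive2 U X Y \<longleftrightarrow> (\<forall>x\<in>U. lie X Y x \<in> span {X x, Y x})"

definition flat :: "metric \<Rightarrow> vfield \<Rightarrow> real^4 \<Rightarrow> real^4" where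
  "flat g X x = (\<chi> a. \<Sum>b\<in>UNIV. g x $ a $ b * X x $ b)"

definition d1 :: "(real^4 \<Rightarrow> real^4) \<Rightarrow> form2" where
  "d1 \<alpha> x a b = pd a (\<lambda>y. \<alpha> y $ b) x - pd b (\<lambda>y. \<alpha> y $ a) x"

definition wedge :: "(real^4 \<Rightarrow> real^4) \<Rightarrow> (real^4 \<Rightarrow> real^4) \<Rightarrow> form2" where
  "wedge \<alpha> \<beta> x a b = \<alpha> x $ a * \<beta> x $ b - \<alpha> x $ b * \<beta> x $ a"

definition orthonormal_frame :: "(real^4) set \<Rightarrow> metric \<Rightarrow> (4 \<Rightarrow> vfield) \<Rightarrow> bool" where
  "orthonormal_frame U g e \<longleftrightarrow> (\<forall>x\<in>U. \<forall>\<mu> \<nu>.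
      gdot g x (e \<mu> x) (e \<nu> x) = (if \<mu> = \<nu> then (if \<mu> = 0 then -1 else 1) else 0))"

definition Hvec :: "metric \<Rightarrow> (4 \<Rightarrow> vfield) \<Rightarrow> vfield" where
  "Hvec g e x = (1/2) *\<^sub>R
     ((- gdot g x (cov g (e 0) (e 0) x) (e 2 x) + gdot g x (cov g (e 1) (e 1) x) (e 2 x)) *\<^sub>R e 2 x
    + (- gdot g x (cov g (e 0) (e 0) x) (e 3 x) + gdot g x (cov g (e 1) (e 1) x) (e 3 x)) *\<^sub>R e 3 x)"

definition Htil :: "metric \<Rightarrow> (4 \<Rightarrow> vfield) \<Rightarrow> vfield" where
  "Htil g e x = (1/2) *\<^sub>R
     ((- gdot g x (cov g (e 2) (e 2) x) (e 0 x) - gdot g x (cov g (e 3) (e 3) x) (e 0 x)) *\<^sub>R e 0 x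
    + (gdot g x (cov g (e 2) (e 2) x) (e 1 x) + gdot g x (cov g (e 3) (e 3) x) (e 1 x)) *\<^sub>R e 1 x)"

definition closed2 :: "(real^4) set \<Rightarrow> form2 \<Rightarrow> bool" where
  "closed2 U F \<longleftrightarrow> (\<forall>x\<in>U. \<forall>a b c.
      pd a (\<lambda>y. F y b c) x + pd b (\<lambda>y. F y c a) x + pd c (\<lambda>y. F y a b) x = 0)"

definition raise2 :: "metric \<Rightarrow> form2 \<Rightarrow> real^4 \<Rightarrow> 4 \<Rightarrow> 4 \<Rightarrow> real" where
  "raise2 g F x m n = (\<Sum>a\<in>UNIV. \<Sum>b\<in>UNIV. ginv g x $ m $ a * ginv g x $ n $ b * F x a b)"

text \<open>Current density j^nu = - nabla_mu F^{mu nu}.\<close>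
definition current :: "metric \<Rightarrow> form2 \<Rightarrow> real^4 \<Rightarrow> real^4" where
  "current g F x = (\<chi> \<nu>. - ((\<Sum>\<mu>\<in>UNIV. pd \<mu> (\<lambda>y. raise2 g F y \<mu> \<nu>) x)
      + (\<Sum>\<mu>\<in>UNIV. \<Sum>l\<in>UNIV. christ g x \<mu> \<mu> l * raise2 g F x l \<nu>)
      + (\<Sum>\<mu>\<in>UNIV. \<Sum>l\<in>UNIV. christ g x \<nu> \<mu> l * raise2 g F x \<mu> l)))"

definition force_free :: "(real^4) set \<Rightarrow> metric \<Rightarrow> form2 \<Rightarrow> bool" where
  "force_free U g F \<longleftrightarrow> (\<forall>x\<in>U. \<forall>v :: real^4.
      (\<Sum>a\<in>UNIV. \<Sum>b\<in>UNIV. F x a b * current g F x $ a * v $ b) = 0)"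

definition mag_dominated :: "(real^4) set \<Rightarrow> metric \<Rightarrow> form2 \<Rightarrow> bool" where
  "mag_dominated U g F \<longleftrightarrow> (\<forall>x\<in>U. (\<Sum>a\<in>UNIV. \<Sum>b\<in>UNIV. F x a b * raise2 g F x a b) > 0)"

definition ker2 :: "form2 \<Rightarrow> real^4 \<Rightarrow> (real^4) set" where
  "ker2 F x = {v. \<forall>b. (\<Sum>a\<in>UNIV. v $ a * F x a b) = 0}"

end

theory Submission
  imports Defs
begin

lemma matrix_inv_left': "invertible (A::real^'n^'n) \<Longrightarrow> matrix_inv A ** A = mat 1"
  unfolding invertible_def matrix_inv_def by (metis (mono_tags, lifting) someI_ex)

lemma eta_det: "det (\<chi> (\<mu>::4) (\<nu>::4). if \<mu> = \<nu> then (if \<mu> = 0 then -1 else 1) else (0::real)) = -1"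
proof -
  have "det (\<chi> (\<mu>::4) (\<nu>::4). if \<mu> = \<nu> then (if \<mu> = 0 then -1 else 1) else (0::real))
      = (\<Prod>i\<in>UNIV. (if i = (0::4) then -1 else (1::real)))"
    by (subst det_diagonal) simp_all
  also have "\<dots> = (if (0::4) = 0 then -1 else 1) * (\<Prod>i\<in>UNIV - {0}. (if i = (0::4) then -1 else (1::real)))"
    by (rule prod.remove) simp_all
  also have "\<dots> = -1" by simp
  finally show ?thesis .
qed

lemma frame_invertible:
  assumes fr: "\<forall>\<mu> \<nu>. gdot g x (e \<mu> x) (e \<nu> x) = (if \<mu> = \<nu> then (if \<mu> = (0::4) then -1 else 1) else 0)"
  shows "invertible (g x)"
proof -
  define M where "M = (\<chi> a (\<mu>::4). e \<mu> x $ a)"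
  have "transpose M ** g x ** M = (\<chi> (\<mu>::4) (\<nu>::4). if \<mu> = \<nu> then (if \<mu> = 0 then -1 else 1) else (0::real))"
  proof -
    have "(transpose M ** g x ** M) $ \<mu> $ \<nu> = gdot g x (e \<mu> x) (e \<nu> x)" for \<mu> \<nu>
      unfolding M_def gdot_def matrix_matrix_mult_def transpose_def
      apply (simp add: sum_distrib_right)
      apply (subst sum.swap)
      apply (simp add: mult_ac)
      done
    then show ?thesis using fr by (simp add: vec_eq_iff)
  qed
  then have "det (transpose M ** g x ** M) = -1"
    using eta_det by simp
  then have "det M * det (g x) * det M = -1"
    by (simp only: det_mul det_transpose)
  then have "det (g x) \<noteq> 0" by auto
  then show ?thesis using invertible_det_nz by blast
qed

lemma ginv_flat:
  assumes "invertible (g x)"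
  shows "(\<Sum>a\<in>UNIV. ginv g x $ m $ a * flat g X x $ a) = X x $ m"
proof -
  have "flat g X x = g x *v X x" by (simp add: flat_def matrix_vector_mult_def vec_eq_iff)
  then have "(\<Sum>a\<in>UNIV. ginv g x $ m $ a * flat g X x $ a) = (ginv g x *v (g x *v X x)) $ m"
    by (simp add: matrix_vector_mult_def)
  also have "\<dots> = X x $ m"
    using matrix_inv_left'[OF assms] by (simp add: matrix_vector_mul_assoc ginv_def)
  finally show ?thesis .
qed

lemma sum_alg:
  fixes G :: "4 \<Rightarrow> real" and H p q :: "4 \<Rightarrow> real"
  shows "(\<Sum>a\<in>UNIV. \<Sum>b\<in>UNIV. G a * H b * (c * (p a * q b - p b * q a)))
     = c * ((\<Sum>a\<in>UNIV. G a * p a) * (\<Sum>b\<in>UNIV. H b * q b) - (\<Sum>a\<in>UNIV. G a * q a) * (\<Sum>b\<in>UNIV. H b * p b))" (is "_ = ?rhs")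
proof -
  have "(\<Sum>a\<in>UNIV. \<Sum>b\<in>UNIV. G a * H b * (c * (p a * q b - p b * q a)))
     = (\<Sum>a\<in>UNIV. \<Sum>b\<in>UNIV. c * ((G a * p a) * (H b * q b)) - c * ((G a * q a) * (H b * p b)))"
    by (intro sum.cong refl) (simp add: algebra_simps)
  also have "\<dots> = c * (\<Sum>a\<in>UNIV. \<Sum>b\<in>UNIV. (G a * p a) * (H b * q b))
        - c * (\<Sum>a\<in>UNIV. \<Sum>b\<in>UNIV. (G a * q a) * (H b * p b))"
    by (simp add: sum_subtractf sum_distrib_left)
  also have "\<dots> = ?rhs" by (simp add: sum_product right_diff_distrib)
  finally show ?thesis .
qed

lemma raise_id:
  assumes inv: "invertible (g x)"
    and Fx: "\<forall>a b. F x a b = u x * wedge (flat g (e 2)) (flat g (e 3)) x a b"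
  shows "raise2 g F x m n = u x * (e 2 x $ m * e 3 x $ n - e 3 x $ m * e 2 x $ n)"
proof -
  have "raise2 g F x m n = (\<Sum>a\<in>UNIV. \<Sum>b\<in>UNIV. ginv g x $ m $ a * ginv g x $ n $ b *
     (u x * (flat g (e 2) x $ a * flat g (e 3) x $ b - flat g (e 2) x $ b * flat g (e 3) x $ a)))"
    unfolding raise2_def using Fx by (simp add: wedge_def)
  also have "\<dots> = u x * (e 2 x $ m * e 3 x $ n - e 3 x $ m * e 2 x $ n)"
    by (subst sum_alg) (simp add: ginv_flat[of g x, OF inv])
  finally show ?thesis .
qed

lemma pd_mult:
  assumes "f differentiable (at x)" "h differentiable (at x)"
  shows "pd i (\<lambda>y. f y * h y) x = pd i f x * h x + f x * pd i h x"
proof -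
  have f': "(f has_derivative frechet_derivative f (at x)) (at x)"
    using assms(1) frechet_derivative_works by blast
  have h': "(h has_derivative frechet_derivative h (at x)) (at x)"
    using assms(2) frechet_derivative_works by blast
  have "((\<lambda>y. f y * h y) has_derivative
      (\<lambda>v. f x * frechet_derivative h (at x) v + frechet_derivative f (at x) v * h x)) (at x)"
    using has_derivative_mult[OF f' h'] .
  from frechet_derivative_at[OF this] show ?thesis unfolding pd_def
    by (simp add: fun_eq_iff algebra_simps)
qed

lemma pd_diff:
  assumes "f differentiable (at x)" "h differentiable (at x)"
  shows "pd i (\<lambda>y. f y - h y) x = pd i f x - pd i h x"
proof -
  have f': "(f has_derivative frechet_derivative f (at x)) (at x)"
    using assms(1) frechet_derivative_works by blast
  have h': "(h has_derivative frechet_derivative h (at x)) (at x)"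
    using assms(2) frechet_derivative_works by blast
  have "((\<lambda>y. f y - h y) has_derivative
      (\<lambda>v. frechet_derivative f (at x) v - frechet_derivative h (at x) v)) (at x)"
    using has_derivative_diff[OF f' h'] .
  from frechet_derivative_at[OF this] show ?thesis unfolding pd_def
    by (simp add: fun_eq_iff)
qed

lemma pd_cong:
  assumes "open U" "x \<in> U" "\<And>y. y \<in> U \<Longrightarrow> f y = h y" "f differentiable (at x)"
  shows "pd i f x = pd i h x"
  unfolding pd_def using frechet_derivative_transform_within_open[OF assms(4,1,2,3)] by simp

lemma smooth_diff: "smooth_on U f \<Longrightarrow> x \<in> U \<Longrightarrow> f differentiable (at x)"
  unfolding smooth_on_def by (metis Ck.simps(2))

lemma sum_sym_antisym:
  fixes c r :: "4 \<Rightarrow> 4 \<Rightarrow> real"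
  assumes "\<And>i j. c i j = c j i" "\<And>i j. r i j = - r j i"
  shows "(\<Sum>i\<in>UNIV. \<Sum>j\<in>UNIV. c i j * r i j) = 0"
proof -
  let ?S = "(\<Sum>i\<in>UNIV. \<Sum>j\<in>UNIV. c i j * r i j)"
  have "?S = (\<Sum>j\<in>UNIV. \<Sum>i\<in>UNIV. c i j * r i j)" by (rule sum.swap)
  also have "\<dots> = (\<Sum>j\<in>UNIV. \<Sum>i\<in>UNIV. - (c j i * r j i))"
    by (intro sum.cong refl) (metis assms mult_minus_right)
  also have "\<dots> = - ?S" by (simp add: sum_negf)
  finally show ?thesis by simp
qed

lemma alg2:
  fixes du a b da db a' b' :: "4 \<Rightarrow> real" and G :: "4 \<Rightarrow> 4 \<Rightarrow> real"
  shows "(\<Sum>m\<in>UNIV. du m * (a m * bn - b m * an) + u * ((da m * bn + a m * b' m) - (db m * an + b m * a' m)))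
     + (\<Sum>m\<in>UNIV. \<Sum>l\<in>UNIV. G m l * (u * (a l * bn - b l * an)))
   = ((\<Sum>m\<in>UNIV. du m * a m) + u * ((\<Sum>m\<in>UNIV. da m) + (\<Sum>m\<in>UNIV. \<Sum>l\<in>UNIV. G m l * a l))) * bn
     - ((\<Sum>m\<in>UNIV. du m * b m) + u * ((\<Sum>m\<in>UNIV. db m) + (\<Sum>m\<in>UNIV. \<Sum>l\<in>UNIV. G m l * b l))) * an
     + u * (\<Sum>m\<in>UNIV. a m * b' m - b m * a' m)"
  by (simp add: sum.distrib sum_subtractf sum_distrib_left sum_distrib_right algebra_simps)

theorem corollary1:
  fixes U :: "(real^4) set" and g :: metric and e :: "4 \<Rightarrow> vfield"
    and u :: "real^4 \<Rightarrow> real" and F :: form2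
  assumes U: "open U" "starlike U"
    and g_sym: "\<forall>x\<in>U. \<forall>a b. g x $ a $ b = g x $ b $ a"
    and g_smooth: "smooth_metric U g"
    and e_smooth: "\<forall>\<mu>. smooth_vf U (e \<mu>)"
    and frame: "orthonormal_frame U g e"
    and foliation: "involutive2 U (e 0) (e 1)"
    and H_cond: "\<forall>x\<in>U. \<forall>a b. d1 (flat g (Hvec g e)) x a b = - d1 (flat g (Htil g e)) x a b"
    and u_smooth: "smooth_on U u"
    and F_def: "\<forall>x\<in>U. \<forall>a b. F x a b = u x * wedge (flat g (e 2)) (flat g (e 3)) x a b"
    and F_closed: "closed2 U F"
    and F_ff: "force_free U g F"
    and F_md: "mag_dominated U g F"
    and F_ker: "\<forall>x\<in>U. ker2 F x = span {e 0 x, e 1 x}"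
    and invol: "involutive2 U (e 2) (e 3)"
  shows "\<forall>x\<in>U. current g F x = 0"
proof
  fix x assume x: "x \<in> U"
  have fr: "\<And>y. y \<in> U \<Longrightarrow> \<forall>\<mu> \<nu>. gdot g y (e \<mu> y) (e \<nu> y) = (if \<mu> = \<nu> then (if \<mu> = (0::4) then -1 else 1) else 0)"
    using frame unfolding orthonormal_frame_def by blast
  have inv: "\<And>y. y \<in> U \<Longrightarrow> invertible (g y)"
    using fr frame_invertible by blast
  have de: "\<And>y k i. y \<in> U \<Longrightarrow> (\<lambda>z. e k z $ i) differentiable (at y)"
    using e_smooth smooth_diff unfolding smooth_vf_def by blast
  have du: "\<And>y. y \<in> U \<Longrightarrow> u differentiable (at y)"
    using u_smooth smooth_diff by blast
  have dg: "\<And>y a b. y \<in> U \<Longrightarrow> (\<lambda>z. g z $ a $ b) differentiable (at y)"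
    using g_smooth smooth_diff unfolding smooth_metric_def by blast
  have raise: "\<And>y m n. y \<in> U \<Longrightarrow> raise2 g F y m n = u y * (e 2 y $ m * e 3 y $ n - e 3 y $ m * e 2 y $ n)"
    using raise_id inv F_def by blast
  have S2: "pd m (\<lambda>y. raise2 g F y m n) x = pd m u x * (e 2 x $ m * e 3 x $ n - e 3 x $ m * e 2 x $ n)
     + u x * ((pd m (\<lambda>y. e 2 y $ m) x * e 3 x $ n + e 2 x $ m * pd m (\<lambda>y. e 3 y $ n) x)
       - (pd m (\<lambda>y. e 3 y $ m) x * e 2 x $ n + e 3 x $ m * pd m (\<lambda>y. e 2 y $ n) x))" for m n
  proof -
    have "pd m (\<lambda>y. raise2 g F y m n) x = pd m (\<lambda>y. u y * (e 2 y $ m * e 3 y $ n - e 3 y $ m * e 2 y $ n)) x"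
    proof (rule sym, rule pd_cong[OF U(1) x])
      show "\<And>y. y \<in> U \<Longrightarrow> u y * (e 2 y $ m * e 3 y $ n - e 3 y $ m * e 2 y $ n) = raise2 g F y m n"
        using raise by simp
      show "(\<lambda>y. u y * (e 2 y $ m * e 3 y $ n - e 3 y $ m * e 2 y $ n)) differentiable at x"
          using du[OF x] de[OF x] by (intro differentiable_mult differentiable_diff) auto
    qed
    also have "\<dots> = pd m u x * (e 2 x $ m * e 3 x $ n - e 3 x $ m * e 2 x $ n)
       + u x * pd m (\<lambda>y. e 2 y $ m * e 3 y $ n - e 3 y $ m * e 2 y $ n) x"
      using du[OF x] de[OF x] by (subst pd_mult) auto
    also have "pd m (\<lambda>y. e 2 y $ m * e 3 y $ n - e 3 y $ m * e 2 y $ n) x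
       = pd m (\<lambda>y. e 2 y $ m * e 3 y $ n) x - pd m (\<lambda>y. e 3 y $ m * e 2 y $ n) x"
      using de[OF x] by (subst pd_diff) auto
    also have "\<dots> = (pd m (\<lambda>y. e 2 y $ m) x * e 3 x $ n + e 2 x $ m * pd m (\<lambda>y. e 3 y $ n) x)
       - (pd m (\<lambda>y. e 3 y $ m) x * e 2 x $ n + e 3 x $ m * pd m (\<lambda>y. e 2 y $ n) x)"
      using de[OF x] by (simp add: pd_mult)
    finally show ?thesis .
  qed
  have csym: "christ g x k i j = christ g x k j i" for k i j
  proof -
    have "pd l (\<lambda>y. g y $ i $ j) x = pd l (\<lambda>y. g y $ j $ i) x" for l
      by (rule pd_cong[OF U(1) x _ dg[OF x]]) (use g_sym in blast)
    then show ?thesis unfolding christ_def by (simp add: algebra_simps)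
  qed
  have T3: "(\<Sum>m\<in>UNIV. \<Sum>l\<in>UNIV. christ g x n m l * raise2 g F x m l) = 0" for n
    by (rule sum_sym_antisym) (auto simp: csym raise[OF x] algebra_simps)
  define D2 where "D2 = (\<Sum>m\<in>UNIV. pd m u x * e 2 x $ m) + u x * ((\<Sum>m\<in>UNIV. pd m (\<lambda>y. e 2 y $ m) x)
      + (\<Sum>m\<in>UNIV. \<Sum>l\<in>UNIV. christ g x m m l * e 2 x $ l))"
  define D3 where "D3 = (\<Sum>m\<in>UNIV. pd m u x * e 3 x $ m) + u x * ((\<Sum>m\<in>UNIV. pd m (\<lambda>y. e 3 y $ m) x)
      + (\<Sum>m\<in>UNIV. \<Sum>l\<in>UNIV. christ g x m m l * e 3 x $ l))"
  have cur: "current g F x $ n = - (D2 * e 3 x $ n - D3 * e 2 x $ n + u x * lie (e 2) (e 3) x $ n)" for n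
  proof -
    have "current g F x $ n = - ((\<Sum>m\<in>UNIV. pd m (\<lambda>y. raise2 g F y m n) x)
      + (\<Sum>m\<in>UNIV. \<Sum>l\<in>UNIV. christ g x m m l * raise2 g F x l n))"
      unfolding current_def using T3[of n] by simp
    also have "\<dots> = - (D2 * e 3 x $ n - D3 * e 2 x $ n + u x * lie (e 2) (e 3) x $ n)"
      unfolding S2 raise[OF x] D2_def D3_def lie_def
      by (subst alg2) simp
    finally show ?thesis .
  qed
  obtain p q where pq: "lie (e 2) (e 3) x = p *\<^sub>R e 2 x + q *\<^sub>R e 3 x"
  proof -
    have "lie (e 2) (e 3) x \<in> span {e 2 x, e 3 x}" using invol x unfolding involutive2_def by blast
    then obtain p where "lie (e 2) (e 3) x - p *\<^sub>R e 2 x \<in> span {e 3 x}"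
      using span_breakdown_eq by blast
    then obtain q where "lie (e 2) (e 3) x - p *\<^sub>R e 2 x = q *\<^sub>R e 3 x"
      by (auto simp: span_singleton)
    then show ?thesis using that[of p q] by (simp add: algebra_simps)
  qed
  define \<alpha> where "\<alpha> = D3 - u x * p"
  define \<beta> where "\<beta> = - D2 - u x * q"
  have jx: "current g F x = \<alpha> *\<^sub>R e 2 x + \<beta> *\<^sub>R e 3 x"
    unfolding vec_eq_iff using cur pq by (simp add: \<alpha>_def \<beta>_def algebra_simps)
  have ux: "u x \<noteq> 0"
  proof
    assume "u x = 0"
    then have "\<forall>a b. F x a b = 0" using F_def x by simp
    then have "(\<Sum>a\<in>UNIV. \<Sum>b\<in>UNIV. F x a b * raise2 g F x a b) = 0" by simp
    then show False using F_md x unfolding mag_dominated_def by fastforce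
  qed
  have gd_lin: "gdot g x (c *\<^sub>R y + d *\<^sub>R z) w = c * gdot g x y w + d * gdot g x z w" for c d y z w
    unfolding gdot_def by (simp add: sum.distrib sum_distrib_left algebra_simps)
  have th: "(\<Sum>a\<in>UNIV. w $ a * flat g (e k) x $ a) = gdot g x w (e k x)" for k w
    unfolding flat_def gdot_def by (simp add: sum_distrib_left algebra_simps)
  have ffx: "(\<Sum>a\<in>UNIV. \<Sum>b\<in>UNIV. F x a b * current g F x $ a * v $ b)
     = u x * (gdot g x (current g F x) (e 2 x) * gdot g x v (e 3 x)
        - gdot g x (current g F x) (e 3 x) * gdot g x v (e 2 x))" for v
  proof -
    have "(\<Sum>a\<in>UNIV. \<Sum>b\<in>UNIV. F x a b * current g F x $ a * v $ b)
      = (\<Sum>a\<in>UNIV. \<Sum>b\<in>UNIV. current g F x $ a * v $ b *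
          (u x * (flat g (e 2) x $ a * flat g (e 3) x $ b - flat g (e 2) x $ b * flat g (e 3) x $ a)))"
      using F_def x by (intro sum.cong refl) (simp add: wedge_def)
    also have "\<dots> = u x * (gdot g x (current g F x) (e 2 x) * gdot g x v (e 3 x)
        - gdot g x (current g F x) (e 3 x) * gdot g x v (e 2 x))"
      by (subst sum_alg) (simp add: th)
    finally show ?thesis .
  qed
  have ffv: "(\<Sum>a\<in>UNIV. \<Sum>b\<in>UNIV. F x a b * current g F x $ a * v $ b) = 0" for v
    using F_ff x unfolding force_free_def by blast
  have o: "gdot g x (e k x) (e l x) = (if k = l then (if k = 0 then -1 else 1) else 0)" for k l
    using fr[OF x] by blast
  have "u x * \<alpha> = 0" using ffv[of "e 3 x"] ffx[of "e 3 x"] unfolding jx gd_lin o by simp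
  moreover have "u x * \<beta> = 0" using ffv[of "e 2 x"] ffx[of "e 2 x"] unfolding jx gd_lin o by simp
  ultimately show "current g F x = 0" using ux jx by simp
qed

end
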